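(* Let $|\Omega\rangle=d^{-1/2}\sum_{j=1}^d|j,j\rangle\in\mathbb{C}^d\otimes\mathbb{C}^d$, let $\mathcal{S}=\{\rho\in\mathcal{M}_{d^2}:\rho\ge0,\ \operatorname{tr}_1\rho=\operatorname{tr}_2\rho=\mathbb{1}/d\}$ and $\mathcal{U}=\mathrm{conv}\{(\mathbb{1}\otimes U)|\Omega\rangle\langle\Omega|(\mathbb{1}\otimes U^\dagger): U\in\mathcal{M}_d\text{ unitary}\}$. Let $\rho\in\mathcal{S}$. Then $\rho\in\mathcal{U}$ if and only if $\operatorname{tr}[W\rho]\ge0$ for every Hermitian $W\in\mathcal{M}_{d^2}$ satisfying $\operatorname{tr}_1W=\operatorname{tr}_2W=\mathbb{1}/d$ and $\operatorname{tr}[W\sigma]\ge0$ for all $\sigma\in\mathcal{U}$.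
   Context: $\operatorname{tr}_1,\operatorname{tr}_2$ denote the partial traces over the first and second tensor factor of $\mathbb{C}^d\otimes\mathbb{C}^d$. $\mathcal{S}$ is the set of Jamiolkowski states $(\mathrm{id}\otimes T)(|\Omega\rangle\langle\Omega|)$ of unital channels $T$, and $\mathcal{U}$ that of mixtures of unitary channels. *)

theory Defs
  imports "HOL-Analysis.Analysis"
begin

text \<open>Matrices on C^d (x) C^d are indexed by pairs ('n \<times> 'n), d = CARD('n).
  Entry A $ (i,k) $ (j,l) is the coefficient of |i,k><j,l|.\<close>

type_synonym ('n) bimat = "complex ^ ('n \<times> 'n) ^ ('n \<times> 'n)"

definition cnonneg :: "complex \<Rightarrow> bool" where
  "cnonneg z \<longleftrightarrow> z \<in> \<real> \<and> 0 \<le> Re z"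

definition cadjoint :: "complex ^'m ^'m \<Rightarrow> complex ^'m ^'m" where
  "cadjoint A = (\<chi> i j. cnj (A $ j $ i))"

definition hermitian :: "complex ^'m ^'m \<Rightarrow> bool" where
  "hermitian A \<longleftrightarrow> cadjoint A = A"

definition psd :: "complex ^'m ^'m \<Rightarrow> bool" where
  "psd A \<longleftrightarrow> (\<forall>v :: complex ^'m. cnonneg (\<Sum>i\<in>UNIV. \<Sum>j\<in>UNIV. cnj (v $ i) * A $ i $ j * v $ j))"

definition unitary :: "complex ^'n ^'n \<Rightarrow> bool" where
  "unitary U \<longleftrightarrow> cadjoint U ** U = mat 1"

definition ptr1 :: "'n bimat \<Rightarrow> complex ^'n ^'n" where
  "ptr1 A = (\<chi> k l. \<Sum>i\<in>UNIV. A $ (i,k) $ (i,l))"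

definition ptr2 :: "'n bimat \<Rightarrow> complex ^'n ^'n" where
  "ptr2 A = (\<chi> i j. \<Sum>k\<in>UNIV. A $ (i,k) $ (j,k))"

definition Omega :: "complex ^ ('n::finite \<times> 'n)" where
  "Omega = (\<chi> p. if fst p = snd p then complex_of_real (1 / sqrt (real CARD('n))) else 0)"

definition Omega_proj :: "('n::finite) bimat" where
  "Omega_proj = (\<chi> p q. Omega $ p * cnj (Omega $ q))"

definition id_tensor :: "complex ^'n ^'n \<Rightarrow> 'n bimat" where
  "id_tensor U = (\<chi> p q. if fst p = fst q then U $ snd p $ snd q else 0)"

definition max_mixed :: "complex ^('n::finite) ^'n" where
  "max_mixed = mat (1 / of_nat CARD('n))"

definition Sset :: "('n::finite) bimat set" where
  "Sset = {\<rho>. psd \<rho> \<and> ptr1 \<rho> = max_mixed \<and> ptr2 \<rho> = max_mixed}"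

definition Uset :: "('n::finite) bimat set" where
  "Uset = convex hull {id_tensor U ** Omega_proj ** cadjoint (id_tensor U) | U. unitary U}"

end

theory Submission
  imports Defs
begin


lemma sum_pair: "(\<Sum>p\<in>(UNIV::('a::finite \<times> 'b::finite) set). f p) = (\<Sum>i\<in>UNIV. \<Sum>k\<in>UNIV. f (i,k))"
  by (simp add: sum.cartesian_product UNIV_Times_UNIV[symmetric] del: UNIV_Times_UNIV)

lemma swap3: "(\<Sum>i\<in>A. \<Sum>k\<in>B. \<Sum>l\<in>C. f i k l) = (\<Sum>k\<in>B. \<Sum>l\<in>C. \<Sum>i\<in>A. (f i k l :: 'a::comm_monoid_add))"
  by (subst sum.swap) (simp add: sum.swap[of _ A C])

lemma ifz_mult: "(if c then a else 0) * (b::'a::mult_zero) = (if c then a * b else 0)" by simp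
lemma sum_if_const: "(\<Sum>l\<in>A. if P then f l else 0) = (if P then (\<Sum>l\<in>A. f l) else (0::'a::comm_monoid_add))" by simp

definition tensor_id :: "complex ^'n ^'n \<Rightarrow> 'n bimat" where
  "tensor_id B = (\<chi> p q. if snd p = snd q then B $ fst p $ fst q else 0)"

lemma trace_id_tensor: "trace (id_tensor A ** X) = trace (A ** ptr1 X)"
  apply (simp add: trace_def matrix_matrix_mult_def ptr1_def id_tensor_def sum_pair sum_distrib_left ifz_mult sum_if_const cong: if_cong)
  apply (subst swap3) apply simp done

lemma trace_tensor_id: "trace (tensor_id B ** X) = trace (B ** ptr2 X)"
  apply (simp add: trace_def matrix_matrix_mult_def ptr2_def tensor_id_def sum_pair sum_distrib_left ifz_mult sum_if_const cong: if_cong)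
  by (rule sum.cong, simp, rule sum.swap)

lemma ptr1_add: "ptr1 (A + B) = ptr1 A + ptr1 B" by (simp add: ptr1_def vec_eq_iff sum.distrib)
lemma ptr1_diff: "ptr1 (A - B) = ptr1 A - ptr1 B" by (simp add: ptr1_def vec_eq_iff sum_subtractf)
lemma ptr1_scaleR: "ptr1 (c *\<^sub>R A) = c *\<^sub>R ptr1 A" by (simp add: ptr1_def vec_eq_iff scaleR_sum_right)
lemma ptr2_add: "ptr2 (A + B) = ptr2 A + ptr2 B" by (simp add: ptr2_def vec_eq_iff sum.distrib)
lemma ptr2_diff: "ptr2 (A - B) = ptr2 A - ptr2 B" by (simp add: ptr2_def vec_eq_iff sum_subtractf)
lemma ptr2_scaleR: "ptr2 (c *\<^sub>R A) = c *\<^sub>R ptr2 A" by (simp add: ptr2_def vec_eq_iff scaleR_sum_right)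

lemma ptr1_id_tensor: "ptr1 (id_tensor A :: 'n::finite bimat) = real CARD('n) *\<^sub>R A"
  by (simp add: ptr1_def id_tensor_def vec_eq_iff) (simp add: scaleR_conv_of_real)
lemma ptr2_id_tensor: "ptr2 (id_tensor A :: 'n::finite bimat) = mat (trace A)"
  by (simp add: ptr2_def id_tensor_def vec_eq_iff mat_def trace_def)
lemma ptr1_tensor_id: "ptr1 (tensor_id B :: 'n::finite bimat) = mat (trace B)"
  by (simp add: ptr1_def tensor_id_def vec_eq_iff mat_def trace_def)
lemma ptr2_tensor_id: "ptr2 (tensor_id B :: 'n::finite bimat) = real CARD('n) *\<^sub>R B"
  by (simp add: ptr2_def tensor_id_def vec_eq_iff) (simp add: scaleR_conv_of_real)
lemma ptr1_one: "ptr1 (mat 1 :: 'n::finite bimat) = mat (of_nat CARD('n))"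
  by (simp add: ptr1_def vec_eq_iff mat_def)
lemma ptr2_one: "ptr2 (mat 1 :: 'n::finite bimat) = mat (of_nat CARD('n))"
  by (simp add: ptr2_def vec_eq_iff mat_def)
lemma trace_ptr1: "trace (ptr1 A) = trace A"
  by (simp add: ptr1_def trace_def sum_pair) (rule sum.swap)
lemma trace_ptr2: "trace (ptr2 A) = trace A"
  by (simp add: ptr2_def trace_def sum_pair)
lemma trace_scaleR: "trace (c *\<^sub>R A) = c *\<^sub>R trace A"
  by (simp add: trace_def scaleR_sum_right)
lemma trace_mat: "trace (A ** mat k) = trace A * k"
  by (simp add: trace_def matrix_matrix_mult_def mat_def sum_distrib_right if_distrib cong: if_cong)
lemma scaleR_mmult: "(c *\<^sub>R A) ** B = c *\<^sub>R (A ** (B :: complex^'a^'b))"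
  by (simp add: matrix_matrix_mult_def vec_eq_iff scaleR_sum_right)

lemma herm_entry: "hermitian A \<Longrightarrow> A $ j $ i = cnj (A $ i $ j)"
  unfolding hermitian_def cadjoint_def by (metis (no_types, lifting) complex_cnj_cnj vec_lambda_beta)
lemma hermI:
  assumes h: "\<And>i j. A $ j $ i = cnj (A $ i $ j)" shows "hermitian A"
proof -
  have "\<And>i j. cnj (A $ i $ j) = A $ j $ i" using h by metis
  then show ?thesis unfolding hermitian_def cadjoint_def by (simp add: vec_eq_iff)
qed
lemma herm_add: "hermitian A \<Longrightarrow> hermitian B \<Longrightarrow> hermitian (A + B)"
  by (rule hermI) (simp add: herm_entry[of A, symmetric] herm_entry[of B, symmetric])
lemma herm_diff: "hermitian A \<Longrightarrow> hermitian B \<Longrightarrow> hermitian (A - B)"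
  by (rule hermI) (simp add: herm_entry[of A, symmetric] herm_entry[of B, symmetric])
lemma herm_scaleR: "hermitian A \<Longrightarrow> hermitian (c *\<^sub>R A)"
  by (rule hermI) (simp add: herm_entry[of A, symmetric])
lemma herm_one: "hermitian (mat 1)"
  by (rule hermI) (simp add: mat_def)
lemma herm_id_tensor: "hermitian A \<Longrightarrow> hermitian (id_tensor A)"
  by (rule hermI) (auto simp add: id_tensor_def herm_entry[of A, symmetric])
lemma herm_tensor_id: "hermitian A \<Longrightarrow> hermitian (tensor_id A)"
  by (rule hermI) (auto simp add: tensor_id_def herm_entry[of A, symmetric])
lemma herm_ptr1: "hermitian A \<Longrightarrow> hermitian (ptr1 A)"
  by (rule hermI) (simp add: ptr1_def herm_entry[of A, symmetric])
lemma herm_ptr2: "hermitian A \<Longrightarrow> hermitian (ptr2 A)"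
  by (rule hermI) (simp add: ptr2_def herm_entry[of A, symmetric])
lemma herm_trace_real: "hermitian A \<Longrightarrow> trace A \<in> \<real>"
  unfolding Reals_cnj_iff trace_def by (simp add: herm_entry[of A, symmetric])
lemma herm_trace_prod_real: "hermitian A \<Longrightarrow> hermitian B \<Longrightarrow> trace (A ** B) \<in> \<real>"
proof -
  assume a: "hermitian A" and b: "hermitian B"
  have "cnj (trace (A ** B)) = trace (B ** A)"
    by (simp add: trace_def matrix_matrix_mult_def herm_entry[OF a, symmetric] herm_entry[OF b, symmetric] mult.commute)
  then show ?thesis by (metis Reals_cnj_iff trace_mul_sym)
qed



lemma scaleR_cpx: "r *\<^sub>R (z::complex) = of_real r * z" by (simp add: scaleR_conv_of_real)

definition Hp :: "'n::finite bimat \<Rightarrow> 'n bimat" where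
  "Hp H = H - (1 / real CARD('n)) *\<^sub>R id_tensor (ptr1 H) - (1 / real CARD('n)) *\<^sub>R tensor_id (ptr2 H)
     + (Re (trace H) / (real CARD('n))^2) *\<^sub>R mat 1"

definition Wm :: "real \<Rightarrow> 'n::finite bimat \<Rightarrow> 'n bimat" where
  "Wm t H = t *\<^sub>R Hp H + (1 / (real CARD('n))^2) *\<^sub>R mat 1"

lemma herm_Hp: "hermitian H \<Longrightarrow> hermitian (Hp H)"
  unfolding Hp_def
  by (intro herm_add herm_diff herm_scaleR herm_id_tensor herm_tensor_id herm_ptr1 herm_ptr2 herm_one)

lemma herm_Wm: "hermitian H \<Longrightarrow> hermitian (Wm t H)"
  unfolding Wm_def by (intro herm_add herm_scaleR herm_Hp herm_one)

lemma trace_real_eq: "hermitian H \<Longrightarrow> trace H = of_real (Re (trace H))"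
  using herm_trace_real by (metis Reals_cases Re_complex_of_real)

lemma ptr1_Hp: "hermitian (H :: 'n::finite bimat) \<Longrightarrow> ptr1 (Hp H) = 0"
proof -
  assume h: "hermitian H"
  have tr: "trace (ptr2 H) = of_real (Re (trace H))" using trace_real_eq[OF h] trace_ptr2 by simp
  have d: "real CARD('n) > 0" by simp
  show ?thesis unfolding Hp_def
    apply (simp add: ptr1_add ptr1_diff ptr1_scaleR ptr1_id_tensor ptr1_tensor_id ptr1_one tr)
    apply (simp add: vec_eq_iff mat_def scaleR_cpx)
    using d by (simp add: field_simps power2_eq_square)
qed

lemma ptr2_Hp: "hermitian (H :: 'n::finite bimat) \<Longrightarrow> ptr2 (Hp H) = 0"
proof -
  assume h: "hermitian H"
  have tr: "trace (ptr1 H) = of_real (Re (trace H))" using trace_real_eq[OF h] trace_ptr1 by simp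
  have d: "real CARD('n) > 0" by simp
  show ?thesis unfolding Hp_def
    apply (simp add: ptr2_add ptr2_diff ptr2_scaleR ptr2_id_tensor ptr2_tensor_id ptr2_one tr)
    apply (simp add: vec_eq_iff mat_def scaleR_cpx)
    using d by (simp add: field_simps power2_eq_square)
qed

lemma ptr1_Wm: "hermitian (H :: 'n::finite bimat) \<Longrightarrow> ptr1 (Wm t H) = max_mixed"
  unfolding Wm_def max_mixed_def
  apply (simp add: ptr1_add ptr1_scaleR ptr1_Hp ptr1_one)
  apply (simp add: vec_eq_iff mat_def scaleR_cpx)
  by (simp add: field_simps power2_eq_square)

lemma ptr2_Wm: "hermitian (H :: 'n::finite bimat) \<Longrightarrow> ptr2 (Wm t H) = max_mixed"
  unfolding Wm_def max_mixed_def
  apply (simp add: ptr2_add ptr2_scaleR ptr2_Hp ptr2_one)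
  apply (simp add: vec_eq_iff mat_def scaleR_cpx)
  by (simp add: field_simps power2_eq_square)

lemma mm_add_r: "(A + B) ** (C :: complex^'a^'b) = A ** C + B ** C"
  by (simp add: matrix_matrix_mult_def vec_eq_iff sum.distrib distrib_right)
lemma mm_diff_r: "(A - B) ** (C :: complex^'a^'b) = A ** C - B ** C"
  by (simp add: matrix_matrix_mult_def vec_eq_iff sum_subtractf left_diff_distrib)

lemma trace_M: "trace (max_mixed :: complex^'n::finite^'n) = 1"
  by (simp add: max_mixed_def trace_def mat_def)

lemma trace_Hp:
  fixes H X :: "'n::finite bimat"
  assumes h: "hermitian H" and x1: "ptr1 X = max_mixed" and x2: "ptr2 X = max_mixed"
  shows "trace (Hp H ** X) = trace (H ** X) - of_real (Re (trace H) / (real CARD('n))^2)"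
proof -
  have d: "real CARD('n) > 0" by simp
  have t1: "trace (ptr1 H) = of_real (Re (trace H))" using trace_real_eq[OF h] trace_ptr1 by simp
  have t2: "trace (ptr2 H) = of_real (Re (trace H))" using trace_real_eq[OF h] trace_ptr2 by simp
  have tX: "trace X = 1" by (metis trace_ptr1 x1 trace_M)
  show ?thesis unfolding Hp_def
    apply (simp add: mm_add_r mm_diff_r scaleR_mmult trace_add trace_sub trace_scaleR trace_id_tensor trace_tensor_id x1 x2 tX)
    apply (simp add: max_mixed_def trace_mat t1 t2 scaleR_cpx)
    using d by (simp add: field_simps power2_eq_square)
qed

lemma trace_Wm:
  fixes H X :: "'n::finite bimat"
  assumes h: "hermitian H" and hx: "hermitian X" and x1: "ptr1 X = max_mixed" and x2: "ptr2 X = max_mixed"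
  shows "trace (Wm t H ** X) = of_real (t * (Re (trace (H ** X)) - Re (trace H) / (real CARD('n))^2) + 1 / (real CARD('n))^2)"
proof -
  have tX: "trace X = 1" by (metis trace_ptr1 x1 trace_M)
  have r: "trace (H ** X) = of_real (Re (trace (H ** X)))"
    using herm_trace_prod_real[OF h hx] by (metis Reals_cases Re_complex_of_real)
  show ?thesis unfolding Wm_def
    apply (simp add: mm_add_r scaleR_mmult trace_add trace_scaleR trace_Hp[OF h x1 x2] tX)
    apply (subst r)
    by (simp add: scaleR_cpx)
qed

definition Hs :: "'n::finite bimat \<Rightarrow> 'n bimat" where
  "Hs a = (1/2) *\<^sub>R (cadjoint a + a)"

lemma herm_Hs: "hermitian (Hs a)"
  unfolding Hs_def by (intro herm_scaleR, rule hermI) (simp add: cadjoint_def add.commute)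

lemma inner_herm:
  fixes a X :: "'n::finite bimat"
  assumes hx: "hermitian X"
  shows "inner a X = Re (trace (Hs a ** X))"
proof -
  have e: "\<And>p q. X $ q $ p = cnj (X $ p $ q)" using herm_entry[OF hx] by blast
  have i: "inner a X = (\<Sum>p\<in>UNIV. \<Sum>q\<in>UNIV. Re (a $ p $ q * cnj (X $ p $ q)))"
    by (simp add: inner_vec_def inner_complex_def)
  have s1: "(\<Sum>p\<in>UNIV. \<Sum>q\<in>UNIV. Re (cnj (a $ q $ p) * X $ q $ p)) = (\<Sum>p\<in>UNIV. \<Sum>q\<in>UNIV. Re (a $ p $ q * cnj (X $ p $ q)))"
    apply (subst sum.swap) by (simp add: mult.commute)
  have s2: "(\<Sum>p\<in>UNIV. \<Sum>q\<in>UNIV. Re (a $ p $ q * X $ q $ p)) = (\<Sum>p\<in>UNIV. \<Sum>q\<in>UNIV. Re (a $ p $ q * cnj (X $ p $ q)))"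
    by (simp add: herm_entry[OF hx, symmetric])
  have t: "trace (Hs a ** X) = (1/2) * ((\<Sum>p\<in>UNIV. \<Sum>q\<in>UNIV. cnj (a $ q $ p) * X $ q $ p) + (\<Sum>p\<in>UNIV. \<Sum>q\<in>UNIV. a $ p $ q * X $ q $ p))"
    apply (simp add: Hs_def trace_def matrix_matrix_mult_def cadjoint_def scaleR_cpx distrib_right sum.distrib sum_distrib_left mult.assoc)
    by (simp add: add_divide_distrib sum.distrib sum_divide_distrib[symmetric])
  have "Re (trace (Hs a ** X)) = (1/2) * ((\<Sum>p\<in>UNIV. \<Sum>q\<in>UNIV. Re (cnj (a $ q $ p) * X $ q $ p)) + (\<Sum>p\<in>UNIV. \<Sum>q\<in>UNIV. Re (a $ p $ q * X $ q $ p)))"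
    unfolding t by (simp only: Re_sum plus_complex.sel Re_divide_numeral mult.commute[of "1/2"] divide_inverse[symmetric]) simp
  then show ?thesis using i s1 s2 by simp
qed



lemma mult_ifz: "(a::'a::mult_zero) * (if c then b else 0) = (if c then a * b else 0)" by simp

lemma ifz_div: "(if c then a else 0) / (b::'a::field) = (if c then a / b else 0)" by simp

lemma cnj_ifz: "cnj (if c then a else 0) = (if c then cnj a else 0)" by simp

definition gen :: "complex^'n^'n \<Rightarrow> 'n::finite bimat" where
  "gen U = id_tensor U ** Omega_proj ** cadjoint (id_tensor U)"

lemma Omega_proj_eq: "(Omega_proj :: 'n::finite bimat) =
  (\<chi> p q. if fst p = snd p then (if fst q = snd q then of_real (1 / real CARD('n)) else 0) else 0)"
proof -
  have "complex_of_real (1 / sqrt (real CARD('n))) * cnj (complex_of_real (1 / sqrt (real CARD('n))))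
     = of_real (1 / real CARD('n))"
    by (simp add: of_real_mult[symmetric] del: of_real_mult)
  then show ?thesis by (simp add: Omega_proj_def Omega_def vec_eq_iff)
qed

lemma gen_eq: "gen (U :: complex^'n::finite^'n) =
  (\<chi> p q. U $ snd p $ fst p * cnj (U $ snd q $ fst q) * of_real (1 / real CARD('n)))"
proof -
  have s1: "id_tensor U ** (Omega_proj :: 'n bimat) =
     (\<chi> p q. if fst q = snd q then U $ snd p $ fst p * of_real (1 / real CARD('n)) else 0)"
    by (simp add: Omega_proj_eq id_tensor_def matrix_matrix_mult_def vec_eq_iff sum_pair ifz_mult sum_if_const mult_ifz ifz_div cong: if_cong)
  show ?thesis unfolding gen_def s1
    by (simp add: id_tensor_def cadjoint_def matrix_matrix_mult_def vec_eq_iff sum_pair ifz_mult sum_if_const mult_ifz ifz_div cnj_ifz mult_ac cong: if_cong)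
qed

lemma unitary_right: "unitary U \<Longrightarrow> U ** cadjoint U = mat 1"
  unfolding unitary_def by (simp add: matrix_left_right_inverse)

lemma unitary_entry_left: "unitary U \<Longrightarrow> (\<Sum>k\<in>UNIV. cnj (U $ k $ i) * U $ k $ j) = (if i = j then 1 else 0)"
  unfolding unitary_def by (drule arg_cong[where f="\<lambda>M. M $ i $ j"]) (simp add: matrix_matrix_mult_def cadjoint_def mat_def)

lemma unitary_entry_right: "unitary U \<Longrightarrow> (\<Sum>k\<in>UNIV. U $ i $ k * cnj (U $ j $ k)) = (if i = j then 1 else 0)"
  by (drule unitary_right, drule arg_cong[where f="\<lambda>M. M $ i $ j"]) (simp add: matrix_matrix_mult_def cadjoint_def mat_def)

lemma gen_herm: "hermitian (gen U)"
  by (rule hermI) (simp add: gen_eq)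

lemma gen_ptr1: "unitary (U :: complex^'n::finite^'n) \<Longrightarrow> ptr1 (gen U) = max_mixed"
proof -
  assume u: "unitary U"
  have e: "\<And>k l. (\<Sum>i\<in>UNIV. U $ k $ i * cnj (U $ l $ i)) = (if k = l then 1 else 0)"
    by (rule unitary_entry_right[OF u])
  show ?thesis by (simp add: ptr1_def gen_eq max_mixed_def mat_def vec_eq_iff sum_divide_distrib[symmetric] e)
qed

lemma gen_ptr2: "unitary (U :: complex^'n::finite^'n) \<Longrightarrow> ptr2 (gen U) = max_mixed"
proof -
  assume u: "unitary U"
  have e: "\<And>i j. (\<Sum>k\<in>UNIV. U $ k $ i * cnj (U $ k $ j)) = (if i = j then 1 else 0)"
    using unitary_entry_left[OF u] by (metis (no_types, lifting) mult.commute sum.cong)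
  show ?thesis by (simp add: ptr2_def gen_eq max_mixed_def mat_def vec_eq_iff sum_divide_distrib[symmetric] e)
qed

definition Cset :: "'n::finite bimat set" where
  "Cset = {X. hermitian X \<and> ptr1 X = max_mixed \<and> ptr2 X = max_mixed}"

lemma convex_Cset: "convex Cset"
  unfolding convex_def Cset_def
  by (auto intro!: herm_add herm_scaleR simp: ptr1_add ptr1_scaleR ptr2_add ptr2_scaleR scaleR_left_distrib[symmetric])

lemma Uset_gen: "(Uset :: 'n::finite bimat set) = convex hull (gen ` {U. unitary U})"
  unfolding Uset_def gen_def by (rule arg_cong[where f="\<lambda>S. convex hull S"]) auto

lemma Uset_Cset: "Uset \<subseteq> Cset"
  unfolding Uset_gen
  apply (rule hull_minimal)
   apply (auto simp: Cset_def gen_herm gen_ptr1 gen_ptr2)[1]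
  by (rule convex_Cset)

lemma cont_gen: "continuous_on UNIV (gen :: complex^'n::finite^'n \<Rightarrow> 'n bimat)"
  unfolding gen_eq[abs_def] by (intro continuous_intros)

lemma unitary_iff: "unitary U \<longleftrightarrow> (\<chi> i j. \<Sum>k\<in>UNIV. cnj (U $ k $ i) * U $ k $ j) = mat 1"
  unfolding unitary_def by (simp add: matrix_matrix_mult_def cadjoint_def)

lemma closed_unitary: "closed {U :: complex^'n::finite^'n. unitary U}"
  unfolding unitary_iff by (intro closed_Collect_eq continuous_intros)

lemma norm_vec_le_sum: "norm (x :: 'a::real_normed_vector^'n::finite) \<le> (\<Sum>i\<in>UNIV. norm (x $ i))"
  by (simp add: norm_vec_def L2_set_le_sum)

lemma unitary_entry_bound: "unitary U \<Longrightarrow> norm (U $ k $ i) \<le> 1"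
proof -
  assume u: "unitary U"
  have "(\<Sum>k\<in>UNIV. cnj (U $ k $ i) * U $ k $ i) = 1" using unitary_entry_left[OF u, of i i] by simp
  moreover have "complex_of_real (\<Sum>k\<in>UNIV. (norm (U $ k $ i))^2) = (\<Sum>k\<in>UNIV. cnj (U $ k $ i) * U $ k $ i)"
    by (simp only: of_real_sum complex_norm_square mult.commute)
  ultimately have "complex_of_real (\<Sum>k\<in>UNIV. (norm (U $ k $ i))^2) = 1" by simp
  then have s: "(\<Sum>k\<in>UNIV. (norm (U $ k $ i))^2) = 1" using of_real_eq_1_iff by blast
  have "(norm (U $ k $ i))^2 \<le> (\<Sum>k\<in>UNIV. (norm (U $ k $ i))^2)"
    by (rule member_le_sum) auto
  then have "(norm (U $ k $ i))^2 \<le> 1^2" using s by simp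
  then show ?thesis by (rule power2_le_imp_le) simp
qed

lemma bounded_unitary: "bounded {U :: complex^'n::finite^'n. unitary U}"
proof -
  have "\<And>U :: complex^'n^'n. unitary U \<Longrightarrow> norm U \<le> real CARD('n) * real CARD('n)"
  proof -
    fix U :: "complex^'n^'n" assume u: "unitary U"
    have "norm U \<le> (\<Sum>k\<in>UNIV. norm (U $ k))" by (rule norm_vec_le_sum)
    also have "\<dots> \<le> (\<Sum>k\<in>(UNIV::'n set). \<Sum>i\<in>(UNIV::'n set). 1)"
    proof (rule sum_mono)
      fix k
      have "norm (U $ k) \<le> (\<Sum>i\<in>UNIV. norm (U $ k $ i))" by (rule norm_vec_le_sum)
      also have "\<dots> \<le> (\<Sum>i\<in>(UNIV::'n set). 1)" by (rule sum_mono) (rule unitary_entry_bound[OF u])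
      finally show "norm (U $ k) \<le> (\<Sum>i\<in>(UNIV::'n set). 1)" .
    qed
    also have "\<dots> = real CARD('n) * real CARD('n)" by simp
    finally show "norm U \<le> real CARD('n) * real CARD('n)" .
  qed
  then show ?thesis unfolding bounded_iff by blast
qed

lemma compact_Uset: "compact (Uset :: 'n::finite bimat set)"
  unfolding Uset_gen
  apply (rule compact_convex_hull)
  apply (rule compact_continuous_image)
   apply (rule continuous_on_subset[OF cont_gen], simp)
  using closed_unitary bounded_unitary by (simp add: compact_eq_bounded_closed)



lemma qform2:
  fixes A :: "complex^'m::finite^'m"
  assumes ab: "a \<noteq> b"
  shows "(\<Sum>i\<in>UNIV. \<Sum>j\<in>UNIV. cnj ((\<chi> i. (if i = a then x else 0) + (if i = b then y else 0)) $ i) * A $ i $ j *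
            (\<chi> i. (if i = a then x else 0) + (if i = b then y else 0)) $ j)
       = cnj x * A $ a $ a * x + cnj x * A $ a $ b * y + cnj y * A $ b $ a * x + cnj y * A $ b $ b * y"
  using ab by (simp add: distrib_left distrib_right sum.distrib ifz_mult mult_ifz cnj_ifz sum_if_const cong: if_cong)

lemma qform1:
  fixes A :: "complex^'m::finite^'m"
  shows "(\<Sum>i\<in>UNIV. \<Sum>j\<in>UNIV. cnj ((\<chi> i. if i = a then 1 else 0) $ i) * A $ i $ j *
            (\<chi> i. if i = a then 1 else 0) $ j) = A $ a $ a"
  by (simp add: ifz_mult mult_ifz cnj_ifz sum_if_const cong: if_cong)

lemma psd_herm:
  fixes A :: "complex^'m::finite^'m"
  assumes p: "psd A" shows "hermitian A"
proof (rule hermI)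
  fix i j
  have r: "\<And>v :: complex^'m. Im (\<Sum>i\<in>UNIV. \<Sum>j\<in>UNIV. cnj (v $ i) * A $ i $ j * v $ j) = 0"
    using p unfolding psd_def cnonneg_def by (simp add: complex_is_Real_iff)
  have d: "Im (A $ a $ a) = 0" for a
    using r[of "\<chi> i. if i = a then 1 else 0"] unfolding qform1 .
  show "A $ j $ i = cnj (A $ i $ j)"
  proof (cases "i = j")
    case True then show ?thesis using d[of i] by (simp add: complex_eq_iff)
  next
    case False
    have e1: "Im (A $ i $ j + A $ j $ i) = 0"
      using r[of "\<chi> k. (if k = i then 1 else 0) + (if k = j then 1 else 0)"] qform2[OF False, where A=A and x=1 and y=1] d[of i] d[of j] by (simp only:) simp
    have e2: "Re (A $ i $ j - A $ j $ i) = 0"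
      using r[of "\<chi> k. (if k = i then 1 else 0) + (if k = j then \<i> else 0)"] qform2[OF False, where A=A and x=1 and y="\<i>"] d[of i] d[of j] by (simp only:) simp
    show ?thesis using e1 e2 by (simp add: complex_eq_iff)
  qed
qed



definition sg :: "('n \<Rightarrow> bool) \<Rightarrow> 'n \<Rightarrow> real" where
  "sg s i = (if s i then 1 else -1)"

lemma sign_sum_neq:
  fixes i j :: "'n::finite"
  assumes ij: "i \<noteq> j"
  shows "(\<Sum>s\<in>UNIV. sg s i * sg s j) = 0"
proof -
  let ?fl = "\<lambda>s::'n \<Rightarrow> bool. s(i := \<not> s i)"
  have "(\<Sum>s\<in>UNIV. sg s i * sg s j) = (\<Sum>s\<in>UNIV. sg (?fl s) i * sg (?fl s) j)"
    by (rule sum.reindex_bij_witness[where i="?fl" and j="?fl"]) auto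
  also have "\<dots> = - (\<Sum>s\<in>UNIV. sg s i * sg s j)"
  proof -
    have "\<And>s. sg (?fl s) i * sg (?fl s) j = - (sg s i * sg s j)"
      using ij by (case_tac "s i"; case_tac "s j") (simp_all add: sg_def)
    then show ?thesis by (simp add: sum_negf)
  qed
  finally show ?thesis by simp
qed

lemma sign_sum_eq: "(\<Sum>s\<in>(UNIV :: ('n::finite \<Rightarrow> bool) set). sg s i * sg s i) = real CARD('n \<Rightarrow> bool)"
proof -
  have "\<And>s. sg s i * sg s i = 1" by (simp add: sg_def)
  then show ?thesis by simp
qed

definition sw :: "'n \<Rightarrow> 'n \<Rightarrow> 'n \<Rightarrow> 'n" where
  "sw a b x = (if x = a then b else if x = b then a else x)"

lemma sw_sw: "sw a b (sw a b x) = x" by (simp add: sw_def)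
lemma bij_sw: "bij (sw a b)" by (rule o_bij[where g="sw a b"]) (auto simp: sw_sw fun_eq_iff)
lemma sw_eq: "sw k k' x = k' \<longleftrightarrow> x = k" by (auto simp: sw_def)

lemma perm_count_const:
  fixes i k k' :: "'n::finite"
  shows "(\<Sum>\<pi>\<in>{\<pi>::'n\<Rightarrow>'n. bij \<pi>}. if \<pi> i = k then 1 else 0 :: real)
       = (\<Sum>\<pi>\<in>{\<pi>::'n\<Rightarrow>'n. bij \<pi>}. if \<pi> i = k' then 1 else 0)"
  by (rule sum.reindex_bij_witness[where i="\<lambda>\<pi>. sw k k' \<circ> \<pi>" and j="\<lambda>\<pi>. sw k k' \<circ> \<pi>"])
     (auto simp: sw_sw fun_eq_iff sw_eq intro: bij_comp bij_sw)

lemma perm_count: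
  fixes i k :: "'n::finite"
  shows "(\<Sum>\<pi>\<in>{\<pi>::'n\<Rightarrow>'n. bij \<pi>}. if \<pi> i = k then 1 else 0 :: real)
       = real (card {\<pi>::'n\<Rightarrow>'n. bij \<pi>}) / real CARD('n)"
proof -
  let ?g = "\<lambda>k. (\<Sum>\<pi>\<in>{\<pi>::'n\<Rightarrow>'n. bij \<pi>}. if \<pi> i = k then 1 else 0 :: real)"
  have "(\<Sum>k\<in>UNIV. ?g k) = (\<Sum>\<pi>\<in>{\<pi>::'n\<Rightarrow>'n. bij \<pi>}. \<Sum>k\<in>UNIV. if \<pi> i = k then 1 else 0 :: real)"
    by (rule sum.swap)
  also have "\<dots> = real (card {\<pi>::'n\<Rightarrow>'n. bij \<pi>})" by simp
  finally have "(\<Sum>k\<in>UNIV. ?g k) = real (card {\<pi>::'n\<Rightarrow>'n. bij \<pi>})" .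
  moreover have "(\<Sum>k\<in>UNIV. ?g k) = (\<Sum>k'\<in>(UNIV::'n set). ?g k)"
    by (rule sum.cong[OF refl], rule perm_count_const)
  ultimately have "real CARD('n) * ?g k = real (card {\<pi>::'n\<Rightarrow>'n. bij \<pi>})" by simp
  then show ?thesis by (simp add: field_simps)
qed

lemma avg_entry:
  fixes i j k l :: "'n::finite"
  shows "(\<Sum>\<pi>\<in>{\<pi>::'n\<Rightarrow>'n. bij \<pi>}. \<Sum>s\<in>UNIV. (if k = \<pi> i then sg s i else 0) * (if l = \<pi> j then sg s j else 0))
     = (if i = j \<and> k = l then real (card {\<pi>::'n\<Rightarrow>'n. bij \<pi>}) * real CARD('n \<Rightarrow> bool) / real CARD('n) else 0)"
proof -
  have e: "\<And>\<pi>. (\<Sum>s\<in>UNIV. (if k = \<pi> i then sg s i else 0) * (if l = \<pi> j then sg s j else 0))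
     = (if k = \<pi> i \<and> l = \<pi> j then (\<Sum>s\<in>UNIV. sg s i * sg s j) else 0)"
    by (simp add: ifz_mult mult_ifz sum_if_const)
  show ?thesis
  proof (cases "i = j")
    case False
    then show ?thesis by (simp only: e sign_sum_neq[OF False]) simp
  next
    case True
    then have j: "j = i" by simp
    have "(\<Sum>\<pi>\<in>{\<pi>::'n\<Rightarrow>'n. bij \<pi>}. \<Sum>s\<in>UNIV. (if k = \<pi> i then sg s i else 0) * (if l = \<pi> i then sg s i else 0))
        = (\<Sum>\<pi>\<in>{\<pi>::'n\<Rightarrow>'n. bij \<pi>}. if k = \<pi> i \<and> l = \<pi> i then real CARD('n \<Rightarrow> bool) else 0)"
      using e[of _, unfolded j] by (simp only: sign_sum_eq)
    also have "\<dots> = (if k = l then real CARD('n \<Rightarrow> bool) * (\<Sum>\<pi>\<in>{\<pi>::'n\<Rightarrow>'n. bij \<pi>}. if \<pi> i = k then 1 else 0 :: real) else 0)"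
      by (cases "k = l") (auto simp: sum_distrib_left intro!: sum.cong sum.neutral)
    also have "\<dots> = (if i = i \<and> k = l then real (card {\<pi>::'n\<Rightarrow>'n. bij \<pi>}) * real CARD('n \<Rightarrow> bool) / real CARD('n) else 0)"
      by (simp add: perm_count)
    finally show ?thesis unfolding j .
  qed
qed

definition V :: "('n \<Rightarrow> 'n) \<Rightarrow> ('n \<Rightarrow> bool) \<Rightarrow> complex^'n^'n" where
  "V \<pi> s = (\<chi> k i. complex_of_real (if k = \<pi> i then sg s i else 0))"

lemma unitary_V:
  fixes \<pi> :: "'n::finite \<Rightarrow> 'n"
  assumes b: "bij \<pi>" shows "unitary (V \<pi> s)"
proof -
  have inj: "\<pi> i = \<pi> j \<longleftrightarrow> i = j" for i j using bij_is_inj[OF b] by (auto dest: injD)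
  have r: "(\<Sum>k\<in>UNIV. (if k = \<pi> i then sg s i else 0) * (if k = \<pi> j then sg s j else 0)) = (if i = j then 1 else 0)" for i j
    using inj[of i j] inj[of j i] by (simp add: ifz_mult mult_ifz sum_if_const sg_def)
  have "(\<Sum>k\<in>UNIV. cnj (V \<pi> s $ k $ i) * V \<pi> s $ k $ j) = complex_of_real (\<Sum>k\<in>UNIV. (if k = \<pi> i then sg s i else 0) * (if k = \<pi> j then sg s j else 0))" for i j
    by (simp add: V_def of_real_sum)
  then show ?thesis unfolding unitary_def using r
    by (simp add: matrix_matrix_mult_def cadjoint_def mat_def vec_eq_iff)
qed

lemma sum_prod_fs: "(\<Sum>x\<in>A\<times>B. g (fst x) (snd x)) = (\<Sum>a\<in>A. \<Sum>b\<in>B. g a b)"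
  by (simp add: sum.cartesian_product split_def)

lemma gen_V_entry:
  "gen (V \<pi> s :: complex^'n::finite^'n) $ (i,k) $ (j,l)
    = complex_of_real ((if k = \<pi> i then sg s i else 0) * (if l = \<pi> j then sg s j else 0) / real CARD('n))"
  by (simp add: gen_eq V_def)

lemma mm_in_Uset: "((1 / (real CARD('n))^2) *\<^sub>R mat 1 :: 'n::finite bimat) \<in> Uset"
proof -
  let ?P = "{\<pi>::'n\<Rightarrow>'n. bij \<pi>}"
  let ?S = "UNIV :: ('n \<Rightarrow> bool) set"
  let ?I = "?P \<times> ?S"
  define w where "w = 1 / (real (card ?P) * real CARD('n \<Rightarrow> bool))"
  have fP: "finite ?P" by simp
  have cP: "card ?P > 0" using fP by (metis (mono_tags) bij_id card_gt_0_iff empty_iff mem_Collect_eq)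
  have mem: "(\<Sum>x\<in>?I. w *\<^sub>R gen (V (fst x) (snd x))) \<in> Uset"
  proof (rule convex_sum)
    show "finite ?I" by simp
    show "convex (Uset :: 'n bimat set)" unfolding Uset_def by (rule convex_convex_hull)
    show "(\<Sum>x\<in>?I. w) = 1" using cP bij_id by (simp add: w_def card_cartesian_product) blast
    show "\<And>x. x \<in> ?I \<Longrightarrow> 0 \<le> w" by (simp add: w_def)
    show "\<And>x. x \<in> ?I \<Longrightarrow> gen (V (fst x) (snd x)) \<in> Uset"
    proof -
      fix x assume "x \<in> ?I"
      then have "unitary (V (fst x) (snd x))" by (auto intro: unitary_V)
      then have "gen (V (fst x) (snd x)) \<in> gen ` {U. unitary U}" by blast
      then show "gen (V (fst x) (snd x)) \<in> Uset" unfolding Uset_gen by (rule hull_inc)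
    qed
  qed
  have eq: "(\<Sum>x\<in>?I. w *\<^sub>R gen (V (fst x) (snd x))) = ((1 / (real CARD('n))^2) *\<^sub>R mat 1 :: 'n bimat)"
  proof (subst vec_eq_iff, intro allI, subst vec_eq_iff, intro allI)
    fix p q :: "'n \<times> 'n"
    obtain i k where p: "p = (i,k)" by fastforce
    obtain j l where q: "q = (j,l)" by fastforce
    have "(\<Sum>x\<in>?I. w *\<^sub>R gen (V (fst x) (snd x))) $ p $ q
       = complex_of_real (w * (\<Sum>\<pi>\<in>?P. \<Sum>s\<in>?S. (if k = \<pi> i then sg s i else 0) * (if l = \<pi> j then sg s j else 0)) / real CARD('n))"
    proof -
      have "(\<Sum>x\<in>?I. w *\<^sub>R gen (V (fst x) (snd x))) $ p $ q
         = (\<Sum>x\<in>?I. complex_of_real (w * ((if k = fst x i then sg (snd x) i else 0) * (if l = fst x j then sg (snd x) j else 0)) / real CARD('n)))"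
        unfolding p q by (simp add: gen_V_entry scaleR_cpx)
      also have "\<dots> = complex_of_real (\<Sum>x\<in>?I. w * ((if k = fst x i then sg (snd x) i else 0) * (if l = fst x j then sg (snd x) j else 0)) / real CARD('n))"
        by (simp only: of_real_sum)
      also have "(\<Sum>x\<in>?I. w * ((if k = fst x i then sg (snd x) i else 0) * (if l = fst x j then sg (snd x) j else 0)) / real CARD('n))
         = (\<Sum>\<pi>\<in>?P. \<Sum>s\<in>?S. w * ((if k = \<pi> i then sg s i else 0) * (if l = \<pi> j then sg s j else 0)) / real CARD('n))"
        by (rule sum_prod_fs)
      also have "\<dots> = w * (\<Sum>\<pi>\<in>?P. \<Sum>s\<in>?S. (if k = \<pi> i then sg s i else 0) * (if l = \<pi> j then sg s j else 0)) / real CARD('n)"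
        by (simp add: sum_distrib_left sum_divide_distrib)
      finally show ?thesis .
    qed
    also have "\<dots> = complex_of_real (if i = j \<and> k = l then 1 / (real CARD('n))^2 else 0)"
      unfolding avg_entry using cP bij_id by (simp add: w_def power2_eq_square) blast
    also have "\<dots> = ((1 / (real CARD('n))^2) *\<^sub>R mat 1 :: 'n bimat) $ p $ q"
      unfolding p q by (simp add: mat_def scaleR_cpx)
    finally show "(\<Sum>x\<in>?I. w *\<^sub>R gen (V (fst x) (snd x))) $ p $ q = ((1 / (real CARD('n))^2) *\<^sub>R mat 1 :: 'n bimat) $ p $ q" .
  qed
  show ?thesis using mem eq by simp
qed



lemma trace_scal_one: "trace (H ** (c *\<^sub>R mat 1)) = c *\<^sub>R trace (H :: complex^'m^'m)"
  by (metis trace_mul_sym scaleR_mmult matrix_mul_lid trace_scaleR)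

theorem proposition2:
  fixes \<rho> :: "('n::finite) bimat"
  assumes "\<rho> \<in> Sset"
  shows "\<rho> \<in> Uset \<longleftrightarrow>
    (\<forall>W :: 'n bimat. hermitian W \<and> ptr1 W = max_mixed \<and> ptr2 W = max_mixed \<and>
        (\<forall>\<sigma>\<in>Uset. cnonneg (trace (W ** \<sigma>)))
      \<longrightarrow> cnonneg (trace (W ** \<rho>)))"
proof
  assume "\<rho> \<in> Uset" then show "\<forall>W :: 'n bimat. hermitian W \<and> ptr1 W = max_mixed \<and> ptr2 W = max_mixed \<and>
        (\<forall>\<sigma>\<in>Uset. cnonneg (trace (W ** \<sigma>))) \<longrightarrow> cnonneg (trace (W ** \<rho>))" by blast
next
  assume R: "\<forall>W :: 'n bimat. hermitian W \<and> ptr1 W = max_mixed \<and> ptr2 W = max_mixed \<and>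
        (\<forall>\<sigma>\<in>Uset. cnonneg (trace (W ** \<sigma>))) \<longrightarrow> cnonneg (trace (W ** \<rho>))"
  show "\<rho> \<in> Uset"
  proof (rule ccontr)
    assume nr: "\<rho> \<notin> Uset"
    have cv: "convex (Uset :: 'n bimat set)" unfolding Uset_def by (rule convex_convex_hull)
    have cl: "closed (Uset :: 'n bimat set)" by (rule compact_imp_closed[OF compact_Uset])
    obtain a b where ab1: "inner a \<rho> < b" and ab2: "\<forall>x\<in>Uset. b < inner a x"
      using separating_hyperplane_closed_point[OF cv cl nr] by blast
    define H where "H = Hs a"
    have hH: "hermitian H" unfolding H_def by (rule herm_Hs)
    have rC: "hermitian \<rho> \<and> ptr1 \<rho> = max_mixed \<and> ptr2 \<rho> = max_mixed"
      using assms psd_herm unfolding Sset_def by blast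
    define d2 where "d2 = (real CARD('n))^2"
    have d2p: "d2 > 0" unfolding d2_def by simp
    define c0 where "c0 = Re (trace H) / d2"
    have M2: "((1 / d2) *\<^sub>R mat 1 :: 'n bimat) \<in> Uset" unfolding d2_def by (rule mm_in_Uset)
    have hM2: "hermitian ((1 / d2) *\<^sub>R mat 1 :: 'n bimat)" by (intro herm_scaleR herm_one)
    have "inner a ((1 / d2) *\<^sub>R mat 1 :: 'n bimat) = c0"
      unfolding inner_herm[OF hM2] H_def[symmetric] c0_def trace_scal_one by simp
    then have bc: "b < c0" using ab2 M2 by fastforce
    define t where "t = 1 / (d2 * (c0 - b))"
    have tp: "t > 0" unfolding t_def using bc d2p by simp
    have tb: "t * (b - c0) = - (1 / d2)" unfolding t_def using bc d2p by (simp add: field_simps)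
    have val: "trace (Wm t H ** X) = of_real (t * (inner a X - c0) + 1 / d2)"
      if "hermitian X" "ptr1 X = max_mixed" "ptr2 X = max_mixed" for X
      using trace_Wm[OF hH that, of t] inner_herm[OF that(1), of a]
      unfolding H_def[symmetric] c0_def d2_def by simp
    have "cnonneg (trace (Wm t H ** \<rho>))"
    proof (rule R[rule_format], intro conjI)
      show "hermitian (Wm t H)" by (rule herm_Wm[OF hH])
      show "ptr1 (Wm t H) = max_mixed" by (rule ptr1_Wm[OF hH])
      show "ptr2 (Wm t H) = max_mixed" by (rule ptr2_Wm[OF hH])
      show "\<forall>\<sigma>\<in>Uset. cnonneg (trace (Wm t H ** \<sigma>))"
      proof
        fix \<sigma> :: "'n bimat" assume s: "\<sigma> \<in> Uset"
        then have sC: "\<sigma> \<in> Cset" using Uset_Cset by blast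
        have "t * (b - c0) \<le> t * (inner a \<sigma> - c0)" using ab2 s tp by (intro mult_left_mono) auto
        then have "0 \<le> t * (inner a \<sigma> - c0) + 1 / d2" using tb by linarith
        then show "cnonneg (trace (Wm t H ** \<sigma>))"
          using val[of \<sigma>] sC unfolding Cset_def cnonneg_def by simp
      qed
    qed
    moreover have "t * (inner a \<rho> - c0) < t * (b - c0)" using ab1 tp by simp
    then have "t * (inner a \<rho> - c0) + 1 / d2 < 0" using tb by linarith
    ultimately show False using val[of \<rho>] rC unfolding cnonneg_def by simp
  qed
qed

end
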